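(* For all integers $n\ge1$ and $i\ge1$, the number of partitions $\lambda\vdash n$ in which the part $i$ occurs with multiplicity exactly $i$ equals the number of partitions $\mu\vdash n$ for which there is an index $s$ with $h_{s,1}(\mu)=s$ and $\mu_s=i$.
   Context: A partition $\mu=(\mu_1\ge\cdots\ge\mu_t>0)$ of $n$ has first-column hook lengths $h_{s,1}(\mu)=\mu_s+(t-s)$ for $1\le s\le t$. *)

theory Defs
  imports Main
begin

text \<open>A partition of n is a weakly decreasing list of positive naturals summing to n,
  written (mu_1 >= ... >= mu_t > 0); list index k corresponds to part mu_(k+1).\<close>
definition partitions :: "nat \<Rightarrow> nat list set" where
  "partitions n = {xs. sorted_wrt (\<ge>) xs \<and> (\<forall>x\<in>set xs. 0 < x) \<and> sum_list xs = n}"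

definition part :: "nat list \<Rightarrow> nat \<Rightarrow> nat" where
  "part mu s = mu ! (s - 1)"

definition hook1 :: "nat list \<Rightarrow> nat \<Rightarrow> nat" where
  "hook1 mu s = part mu s + (length mu - s)"

end

theory Submission
  imports Defs "HOL-Computational_Algebra.Formal_Power_Series"
begin


definition Vs :: "nat \<Rightarrow> (nat \<Rightarrow> bool) \<Rightarrow> nat list set" where
  "Vs k Pd = {v. length v = k \<and> sorted_wrt (\<ge>) v \<and> (\<forall>x\<in>set v. Pd x)}"
definition Qs :: "nat \<Rightarrow> nat list set" where
  "Qs k = {v. sorted_wrt (\<ge>) v \<and> (\<forall>x\<in>set v. 0 < x \<and> x \<le> k)}"
definition cnt :: "nat list set \<Rightarrow> nat \<Rightarrow> nat" where
  "cnt S m = card {v \<in> S. sum_list v = m}"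

lemma len_le_sum: "\<forall>x\<in>set v. 0 < (x::nat) \<Longrightarrow> length v \<le> sum_list v"
  by (induct v) auto

lemma fin_bounded: "finite {v::nat list. length v \<le> L \<and> sum_list v \<le> N}"
proof -
  have "{v::nat list. length v \<le> L \<and> sum_list v \<le> N} \<subseteq> {v. set v \<subseteq> {..N} \<and> length v \<le> L}"
    using member_le_sum_list by fastforce
  thus ?thesis using finite_lists_length_le[of "{..N}" L] finite_subset by blast
qed

lemma fin_Vs: "finite {v \<in> Vs k Pd. sum_list v = m}"
  by (rule finite_subset[OF _ fin_bounded[of k m]]) (auto simp: Vs_def)

lemma fin_Qs: "finite {v \<in> Qs k. sum_list v = m}"
  by (rule finite_subset[OF _ fin_bounded[of m m]]) (auto simp: Qs_def intro!: len_le_sum)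

lemma conv:
  assumes "\<And>j. finite {x\<in>S. w x = j}" "\<And>j. finite {y\<in>T. u y = j}"
  shows "card {(x,y). x\<in>S \<and> y\<in>T \<and> w x + u y = (N::nat)}
       = (\<Sum>j=0..N. card {x\<in>S. w x = j} * card {y\<in>T. u y = N - j})"
proof -
  have eq: "{(x,y). x\<in>S \<and> y\<in>T \<and> w x + u y = N}
      = (\<Union>j\<in>{0..N}. {x\<in>S. w x = j} \<times> {y\<in>T. u y = N - j})" by auto
  have "card (\<Union>j\<in>{0..N}. {x\<in>S. w x = j} \<times> {y\<in>T. u y = N - j})
     = (\<Sum>j=0..N. card ({x\<in>S. w x = j} \<times> {y\<in>T. u y = N - j}))"
    by (rule card_UN_disjoint) (auto simp: assms)
  thus ?thesis using eq by (simp add: card_cartesian_product)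
qed

lemma sum_map_add: "sum_list (map (\<lambda>x. x + c) xs) = sum_list xs + c * length (xs::nat list)"
  by (induct xs) auto

lemma sorted_last_le: "sorted_wrt (\<ge>) v \<Longrightarrow> x \<in> set v \<Longrightarrow> last v \<le> (x::nat)"
proof (induct v)
  case (Cons a v) thus ?case by (cases "v = []") auto
qed simp

lemma Vs_rec:
  assumes "Pd 0"
  shows "cnt (Vs (Suc k) Pd) m = cnt (Vs k Pd) m
     + (if Suc k \<le> m then cnt (Vs (Suc k) (Pd \<circ> Suc)) (m - Suc k) else 0)"
proof -
  let ?S = "{v \<in> Vs (Suc k) Pd. sum_list v = m}"
  let ?SZ = "{v \<in> ?S. 0 \<in> set v}"
  let ?SP = "{v \<in> ?S. 0 \<notin> set v}"
  have un: "?S = ?SZ \<union> ?SP" by auto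
  have c: "card ?S = card ?SZ + card ?SP"
  proof -
    have f: "finite ?S" by (rule fin_Vs)
    have "card (?SZ \<union> ?SP) = card ?SZ + card ?SP"
      by (rule card_Un_disjoint) (auto intro: finite_subset[OF _ f])
    moreover have "card ?S = card (?SZ \<union> ?SP)" using un by (rule arg_cong)
    ultimately show ?thesis by (rule trans[rotated])
  qed
  have s0: "?SZ = (\<lambda>w. w @ [0]) ` {v \<in> Vs k Pd. sum_list v = m}"
  proof
    show "?SZ \<subseteq> (\<lambda>w. w @ [0]) ` {v \<in> Vs k Pd. sum_list v = m}"
    proof
      fix v assume v: "v \<in> ?SZ"
      hence ne: "v \<noteq> []" and l: "last v = 0" using sorted_last_le[of v 0] by (auto simp: Vs_def)
      have vv: "v = butlast v @ [0]" using append_butlast_last_id[OF ne] l by simp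
      have so: "sorted_wrt (\<ge>) (butlast v @ [0])" using v vv by (auto simp: Vs_def)
      have "sorted_wrt (\<ge>) (butlast v)" using so by (simp add: sorted_wrt_append)
      moreover have "length (butlast v) = k" using v by (simp add: Vs_def)
      moreover have "\<forall>x\<in>set (butlast v). Pd x" using v by (auto simp: Vs_def dest: in_set_butlastD)
      moreover have "sum_list (butlast v) = m"
        using v arg_cong[OF vv, of sum_list] by simp
      ultimately have "butlast v \<in> {v \<in> Vs k Pd. sum_list v = m}" by (simp add: Vs_def)
      thus "v \<in> (\<lambda>w. w @ [0]) ` {v \<in> Vs k Pd. sum_list v = m}" using vv by blast
    qed
  qed (auto simp: Vs_def sorted_wrt_append assms)
  have c0: "card ?SZ = cnt (Vs k Pd) m" unfolding s0 cnt_def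
    by (rule card_image) (auto simp: inj_on_def)
  have c1: "card ?SP = (if Suc k \<le> m then cnt (Vs (Suc k) (Pd \<circ> Suc)) (m - Suc k) else 0)"
  proof (cases "Suc k \<le> m")
    case True
    have s1: "?SP = map Suc ` {v \<in> Vs (Suc k) (Pd \<circ> Suc). sum_list v = m - Suc k}"
    proof
      show "?SP \<subseteq> map Suc ` {v \<in> Vs (Suc k) (Pd \<circ> Suc). sum_list v = m - Suc k}"
      proof
        fix v assume v: "v \<in> ?SP"
        have pos: "\<And>x. x \<in> set v \<Longrightarrow> 0 < x" using v by (metis gr0I mem_Collect_eq)
        have vv: "v = map Suc (map (\<lambda>x. x - 1) v)"
          unfolding map_map by (rule sym, rule map_idI) (simp add: pos Suc_pred)
        have sv: "sum_list v = sum_list (map (\<lambda>x. x - 1) v) + length v"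
          using sum_list_Suc[of "\<lambda>x. x" "map (\<lambda>x. x - 1) v"] vv by simp
        have "sorted_wrt (\<ge>) (map (\<lambda>x. x - 1) v)"
          using v unfolding sorted_wrt_map Vs_def
          by (auto elim: sorted_wrt_mono_rel[rotated])
        moreover have "\<forall>x\<in>set (map (\<lambda>x. x - 1) v). (Pd \<circ> Suc) x"
          using v pos by (auto simp: Vs_def Suc_pred)
        moreover have "sum_list v = m" "length v = Suc k" using v by (auto simp: Vs_def)
        moreover have "sum_list (map (\<lambda>x. x - 1) v) = m - Suc k" using sv calculation(3,4) by linarith
        ultimately have "map (\<lambda>x. x - 1) v \<in> {v \<in> Vs (Suc k) (Pd \<circ> Suc). sum_list v = m - Suc k}"
          by (simp add: Vs_def)
        thus "v \<in> map Suc ` {v \<in> Vs (Suc k) (Pd \<circ> Suc). sum_list v = m - Suc k}" using vv by blast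
      qed
    next
      show "map Suc ` {v \<in> Vs (Suc k) (Pd \<circ> Suc). sum_list v = m - Suc k} \<subseteq> ?SP"
        using True by (auto simp: Vs_def sorted_wrt_map sum_list_Suc)
    qed
    show ?thesis unfolding s1 cnt_def using True
      by (subst card_image) (auto simp: inj_on_def)
  next
    case False
    have "?SP = {}"
    proof (rule ccontr)
      assume "?SP \<noteq> {}"
      then obtain v where v: "v \<in> ?SP" by blast
      hence "\<forall>x\<in>set v. 0 < x" by (metis (mono_tags, lifting) gr0I mem_Collect_eq)
      hence "length v \<le> sum_list v" by (rule len_le_sum)
      thus False using v False by (auto simp: Vs_def)
    qed
    hence "card ?SP = 0" by (simp only: card.empty)
    thus ?thesis using False by simp
  qed
  show ?thesis using c c0 c1 by (simp add: cnt_def)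
qed



lemma Qs_rec:
  "cnt (Qs (Suc k)) m = cnt (Qs k) m + (if Suc k \<le> m then cnt (Qs (Suc k)) (m - Suc k) else 0)"
proof -
  let ?S = "{v \<in> Qs (Suc k). sum_list v = m}"
  let ?SA = "{v \<in> ?S. Suc k \<in> set v}"
  let ?SB = "{v \<in> ?S. Suc k \<notin> set v}"
  have un: "?S = ?SA \<union> ?SB" by auto
  have f: "finite ?S" by (rule fin_Qs)
  have "card (?SA \<union> ?SB) = card ?SA + card ?SB"
    by (rule card_Un_disjoint) (auto intro: finite_subset[OF _ f])
  moreover have "card ?S = card (?SA \<union> ?SB)" using un by (rule arg_cong)
  ultimately have c: "card ?S = card ?SA + card ?SB" by (rule trans[rotated])
  have sb: "?SB = {v \<in> Qs k. sum_list v = m}"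
    by (auto simp: Qs_def) (metis le_SucE)+
  have ca: "card ?SA = (if Suc k \<le> m then cnt (Qs (Suc k)) (m - Suc k) else 0)"
  proof (cases "Suc k \<le> m")
    case True
    have sa: "?SA = (\<lambda>w. Suc k # w) ` {v \<in> Qs (Suc k). sum_list v = m - Suc k}"
    proof
      show "?SA \<subseteq> (\<lambda>w. Suc k # w) ` {v \<in> Qs (Suc k). sum_list v = m - Suc k}"
      proof
        fix v assume v: "v \<in> ?SA"
        then obtain x w where vw: "v = x # w" by (cases v) auto
        have sw: "sorted_wrt (\<ge>) (x # w)" and b: "\<forall>y\<in>set (x#w). 0 < y \<and> y \<le> Suc k"
          using v vw by (auto simp: Qs_def)
        have "Suc k \<in> set (x # w)" using v vw by simp
        hence "x = Suc k" using sw b by auto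
        hence "w \<in> {v \<in> Qs (Suc k). sum_list v = m - Suc k}"
          using v vw sw b by (auto simp: Qs_def)
        thus "v \<in> (\<lambda>w. Suc k # w) ` {v \<in> Qs (Suc k). sum_list v = m - Suc k}"
          using vw \<open>x = Suc k\<close> by blast
      qed
    next
      show "(\<lambda>w. Suc k # w) ` {v \<in> Qs (Suc k). sum_list v = m - Suc k} \<subseteq> ?SA"
        using True by (auto simp: Qs_def)
    qed
    show ?thesis unfolding sa cnt_def using True by (subst card_image) auto
  next
    case False
    have "?SA = {}" using False member_le_sum_list[of "Suc k"] by fastforce
    hence "card ?SA = 0" by (simp only: card.empty)
    thus ?thesis using False by simp
  qed
  show ?thesis using c ca sb by (simp add: cnt_def)
qed

lemma Vs0: "cnt (Vs 0 Pd) m = (if m = 0 then 1 else 0)"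
proof -
  have "{v \<in> Vs 0 Pd. sum_list v = m} = (if m = 0 then {[]::nat list} else {})" by (auto simp: Vs_def)
  thus ?thesis by (simp add: cnt_def)
qed

lemma Qs_nil: "v \<in> Qs 0 \<Longrightarrow> v = []"
  by (cases v) (auto simp: Qs_def)

lemma Qs0: "cnt (Qs 0) m = (if m = 0 then 1 else 0)"
proof -
  have "[] \<in> Qs 0" by (simp add: Qs_def)
  have "{v \<in> Qs 0. sum_list v = m} = (if m = 0 then {[]::nat list} else {})"
  proof (intro equalityI subsetI)
    fix v assume "v \<in> {v \<in> Qs 0. sum_list v = m}"
    hence "v = []" "sum_list v = m" using Qs_nil by auto
    thus "v \<in> (if m = 0 then {[]::nat list} else {})" by auto
  next
    fix v assume "v \<in> (if m = 0 then {[]::nat list} else {})"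
    thus "v \<in> {v \<in> Qs 0. sum_list v = m}" using \<open>[] \<in> Qs 0\<close> by (cases "m = 0") auto
  qed
  thus ?thesis by (simp add: cnt_def)
qed

lemma sum0: "\<forall>x\<in>set v. x = (0::nat) \<Longrightarrow> sum_list v = 0" by (induct v) auto

lemma sorted_rep: "sorted_wrt (\<ge>) (replicate n (x::nat))" by (induct n) auto

lemma Vsb0: "cnt (Vs k (\<lambda>x. x \<le> 0)) m = (if m = 0 then 1 else 0)"
proof -
  have r: "replicate k (0::nat) \<in> Vs k (\<lambda>x. x \<le> 0)" by (simp add: Vs_def sorted_rep)
  have "{v \<in> Vs k (\<lambda>x. x \<le> 0). sum_list v = m} = (if m = 0 then {replicate k (0::nat)} else {})"
  proof (intro equalityI subsetI)
    fix v assume v: "v \<in> {v \<in> Vs k (\<lambda>x. x \<le> 0). sum_list v = m}"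
    hence z: "\<forall>x\<in>set v. x = 0" and l: "length v = k" by (auto simp: Vs_def)
    hence "v = replicate k 0" by (simp add: replicate_eqI)
    moreover have "m = 0" using v sum0[OF z] by simp
    ultimately show "v \<in> (if m = 0 then {replicate k 0} else {})" by simp
  next
    fix v assume "v \<in> (if m = 0 then {replicate k (0::nat)} else {})"
    thus "v \<in> {v \<in> Vs k (\<lambda>x. x \<le> 0). sum_list v = m}"
      using r by (cases "m = 0") auto
  qed
  thus ?thesis by (simp add: cnt_def)
qed

definition Pf :: "nat \<Rightarrow> int fps" where "Pf k = Abs_fps (\<lambda>m. int (cnt (Vs k (\<lambda>_. True)) m))"
definition Qf :: "nat \<Rightarrow> int fps" where "Qf k = Abs_fps (\<lambda>m. int (cnt (Qs k) m))"
definition Bf :: "nat \<Rightarrow> nat \<Rightarrow> int fps" where "Bf k b = Abs_fps (\<lambda>m. int (cnt (Vs k (\<lambda>x. x \<le> b)) m))"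
definition qp :: "nat \<Rightarrow> int fps" where "qp k = (\<Prod>j=1..k. 1 - fps_X ^ j)"

lemma qp_Suc: "qp (Suc k) = qp k * (1 - fps_X ^ Suc k)"
  by (simp add: qp_def)

lemma qp_nz: "qp k \<noteq> 0"
proof -
  have "fps_nth (qp k) 0 = 1" by (induct k) (simp_all add: qp_def fps_mult_nth_0 prod.cl_ivl_Suc)
  thus ?thesis by auto
qed

lemma Pf0: "Pf 0 = 1" by (rule fps_ext) (simp add: Pf_def Vs0)
lemma Qf0: "Qf 0 = 1" by (rule fps_ext) (simp add: Qf_def Qs0)
lemma Bf0: "Bf 0 b = 1" by (rule fps_ext) (simp add: Bf_def Vs0)
lemma Bf0': "Bf k 0 = 1" by (rule fps_ext) (unfold Bf_def fps_nth_Abs_fps Vsb0, simp)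

lemma Pf_rec: "Pf (Suc k) = Pf k + fps_X ^ Suc k * Pf (Suc k)"
proof (rule fps_ext)
  fix m
  have e: "((\<lambda>_. True) \<circ> Suc) = (\<lambda>_. True)" by auto
  show "fps_nth (Pf (Suc k)) m = fps_nth (Pf k + fps_X ^ Suc k * Pf (Suc k)) m"
    unfolding fps_add_nth fps_X_power_mult_nth Pf_def fps_nth_Abs_fps
    using Vs_rec[of "\<lambda>_. True" k m] e by auto
qed

lemma Qf_rec: "Qf (Suc k) = Qf k + fps_X ^ Suc k * Qf (Suc k)"
proof (rule fps_ext)
  fix m
  show "fps_nth (Qf (Suc k)) m = fps_nth (Qf k + fps_X ^ Suc k * Qf (Suc k)) m"
    unfolding fps_add_nth fps_X_power_mult_nth Qf_def fps_nth_Abs_fps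
    using Qs_rec[of k m] by auto
qed

lemma Bf_rec: "Bf (Suc k) (Suc b) = Bf k (Suc b) + fps_X ^ Suc k * Bf (Suc k) b"
proof (rule fps_ext)
  fix m
  have e: "((\<lambda>x. x \<le> Suc b) \<circ> Suc) = (\<lambda>x. x \<le> b)" by auto
  show "fps_nth (Bf (Suc k) (Suc b)) m = fps_nth (Bf k (Suc b) + fps_X ^ Suc k * Bf (Suc k) b) m"
    unfolding fps_add_nth fps_X_power_mult_nth Bf_def fps_nth_Abs_fps
    using Vs_rec[of "\<lambda>x. x \<le> Suc b" k m] e by auto
qed

lemma rec_inv:
  assumes "F (Suc k) = F k + fps_X ^ Suc k * F (Suc k)" "F k * qp k = 1"
  shows "F (Suc k) * qp (Suc k) = 1"
proof -
  have e: "F (Suc k) - fps_X ^ Suc k * F (Suc k) = F k"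
    by (subst (1) assms(1)) (simp only: add_diff_cancel_right')
  have "F (Suc k) * (1 - fps_X ^ Suc k) = F (Suc k) - fps_X ^ Suc k * F (Suc k)"
    by (simp add: algebra_simps)
  hence e2: "F (Suc k) * (1 - fps_X ^ Suc k) = F k" using e by (rule trans)
  have "F (Suc k) * qp (Suc k) = (F (Suc k) * (1 - fps_X ^ Suc k)) * qp k"
    by (simp only: qp_Suc mult_ac)
  also have "\<dots> = 1" unfolding e2 by (rule assms(2))
  finally show ?thesis .
qed

lemma Pf_inv: "Pf k * qp k = 1"
proof (induct k)
  case 0 show ?case by (simp add: Pf0 qp_def)
next
  case (Suc k) show ?case by (rule rec_inv[OF Pf_rec Suc])
qed

lemma Qf_inv: "Qf k * qp k = 1"
proof (induct k)
  case 0 show ?case by (simp add: Qf0 qp_def)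
next
  case (Suc k) show ?case by (rule rec_inv[OF Qf_rec Suc])
qed

lemma Bf_inv: "Bf k b * qp k * qp b = qp (k + b)"
proof (induct k arbitrary: b)
  case 0 thus ?case by (simp add: Bf0 qp_def)
next
  case (Suc k)
  note IHk = Suc
  show ?case
  proof (induct b)
    case 0 thus ?case by (simp add: Bf0' qp_def)
  next
    case (Suc b)
    have h1: "Bf k (Suc b) * qp k * qp (Suc b) = qp (Suc (k + b))" using IHk[of "Suc b"] by simp
    have h2: "Bf (Suc k) b * qp (Suc k) * qp b = qp (Suc (k + b))" using Suc.hyps by simp
    have "Bf (Suc k) (Suc b) * qp (Suc k) * qp (Suc b)
      = (Bf k (Suc b) * qp k * qp (Suc b)) * (1 - fps_X ^ Suc k)
        + fps_X ^ Suc k * (Bf (Suc k) b * qp (Suc k) * qp b) * (1 - fps_X ^ Suc b)"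
      by (simp add: Bf_rec qp_Suc algebra_simps)
    also have "\<dots> = qp (Suc (k + b)) * (1 - fps_X ^ Suc k * fps_X ^ Suc b)"
      unfolding h1 h2 by (simp add: algebra_simps)
    also have "\<dots> = qp (Suc k + Suc b)"
      by (simp add: qp_Suc power_add[symmetric])
    finally show ?case .
  qed
qed

lemma main_fps: "Pf a * Qf b = Pf (a + b) * Bf a b"
proof -
  let ?c = "qp a * qp b * qp (a + b)"
  have "Pf a * Qf b * ?c = (Pf a * qp a) * (Qf b * qp b) * qp (a + b)" by (simp add: algebra_simps)
  also have "\<dots> = qp (a + b)" by (simp add: Pf_inv Qf_inv)
  also have "\<dots> = (Pf (a + b) * qp (a + b)) * (Bf a b * qp a * qp b)" by (simp add: Pf_inv Bf_inv)
  also have "\<dots> = Pf (a + b) * Bf a b * ?c" by (simp add: algebra_simps)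
  finally have "Pf a * Qf b * ?c = Pf (a + b) * Bf a b * ?c" .
  moreover have "?c \<noteq> 0" using qp_nz by simp
  ultimately show ?thesis by simp
qed

lemma main_count:
  "(\<Sum>j=0..N. cnt (Vs a (\<lambda>_. True)) j * cnt (Qs b) (N - j))
 = (\<Sum>j=0..N. cnt (Vs (a + b) (\<lambda>_. True)) j * cnt (Vs a (\<lambda>x. x \<le> b)) (N - j))"
proof -
  have "fps_nth (Pf a * Qf b) N = fps_nth (Pf (a + b) * Bf a b) N" by (simp add: main_fps)
  hence eq: "(\<Sum>j=0..N. int (cnt (Vs a (\<lambda>_. True)) j) * int (cnt (Qs b) (N - j)))
    = (\<Sum>j=0..N. int (cnt (Vs (a + b) (\<lambda>_. True)) j) * int (cnt (Vs a (\<lambda>x. x \<le> b)) (N - j)))"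
    unfolding fps_mult_nth Pf_def Qf_def Bf_def fps_nth_Abs_fps .
  have e1: "int (\<Sum>j=0..N. cnt (Vs a (\<lambda>_. True)) j * cnt (Qs b) (N - j))
     = (\<Sum>j=0..N. int (cnt (Vs a (\<lambda>_. True)) j) * int (cnt (Qs b) (N - j)))"
    by (simp add: of_nat_sum)
  have e2: "int (\<Sum>j=0..N. cnt (Vs (a + b) (\<lambda>_. True)) j * cnt (Vs a (\<lambda>x. x \<le> b)) (N - j))
     = (\<Sum>j=0..N. int (cnt (Vs (a + b) (\<lambda>_. True)) j) * int (cnt (Vs a (\<lambda>x. x \<le> b)) (N - j)))"
    by (simp add: of_nat_sum)
  have "int (\<Sum>j=0..N. cnt (Vs a (\<lambda>_. True)) j * cnt (Qs b) (N - j))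
    = int (\<Sum>j=0..N. cnt (Vs (a + b) (\<lambda>_. True)) j * cnt (Vs a (\<lambda>x. x \<le> b)) (N - j))"
    using e1 e2 eq by argo
  thus ?thesis by (rule of_nat_eq_iff[THEN iffD1])
qed




lemma count_rep: "count_list (replicate n x) x = n" by (induct n) auto

lemma filter_eq_rep: "filter (\<lambda>x. x = i) xs = replicate (count_list xs i) i"
  by (induct xs) auto

lemma split3: "sorted_wrt (\<ge>) xs \<Longrightarrow>
   xs = filter (\<lambda>x. i < x) xs @ filter (\<lambda>x. x = i) xs @ filter (\<lambda>x. x < (i::nat)) xs"
proof (induct xs)
  case (Cons x xs)
  hence IH: "xs = filter (\<lambda>x. i < x) xs @ filter (\<lambda>x. x = i) xs @ filter (\<lambda>x. x < i) xs"
    and le: "\<forall>y\<in>set xs. y \<le> x" by auto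
  show ?case
  proof (cases "i < x")
    case True thus ?thesis using IH by simp
  next
    case False
    hence "filter (\<lambda>x. i < x) xs = []" using le by (auto simp: filter_empty_conv)
    moreover have "x < i \<Longrightarrow> filter (\<lambda>x. x = i) xs = []" using le by (auto simp: filter_empty_conv)
    ultimately show ?thesis using IH False by auto
  qed
qed simp

definition FL :: "nat \<Rightarrow> nat list \<Rightarrow> nat list \<Rightarrow> nat list" where
  "FL i A B = map (\<lambda>x. x + Suc i) A @ replicate i i @ B"

lemma FL_fwd:
  assumes "A \<in> Vs a (\<lambda>_. True)" "B \<in> Qs (i - 1)"
  shows "sorted_wrt (\<ge>) (FL i A B) \<and> (\<forall>x\<in>set (FL i A B). 0 < x) \<and> count_list (FL i A B) i = i
    \<and> length (filter (\<lambda>x. i < x) (FL i A B)) = a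
    \<and> sum_list (FL i A B) = sum_list A + sum_list B + (i * i + a * Suc i)"
proof -
  have sA: "sorted_wrt (\<ge>) A" and lA: "length A = a" using assms(1) by (auto simp: Vs_def)
  have sB: "sorted_wrt (\<ge>) B" and bB: "\<forall>x\<in>set B. 0 < x \<and> x < i" using assms(2) by (auto simp: Qs_def)
  have s1: "sorted_wrt (\<ge>) (map (\<lambda>x. x + Suc i) A)"
    using sA unfolding sorted_wrt_map by (auto elim: sorted_wrt_mono_rel[rotated])
  have "sorted_wrt (\<ge>) (FL i A B)"
    unfolding FL_def using s1 sB bB sorted_rep[of i i]
    by (auto simp: sorted_wrt_append less_imp_le)
  moreover have "\<forall>x\<in>set (FL i A B). 0 < x" using bB by (auto simp: FL_def)
  moreover have "count_list (FL i A B) i = i"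
  proof -
    have "count_list (map (\<lambda>x. x + Suc i) A) i = 0" by (auto simp: count_list_0_iff)
    moreover have "count_list B i = 0" using bB by (auto simp: count_list_0_iff)
    moreover have "count_list (replicate i i) i = i" by (rule count_rep)
    ultimately show ?thesis by (simp add: FL_def count_list_append)
  qed
  moreover have "length (filter (\<lambda>x. i < x) (FL i A B)) = a"
  proof -
    have "filter (\<lambda>x. i < x) (replicate i i) = []" by (induct i) auto
    moreover have "filter (\<lambda>x. i < x) B = []" using bB by (auto simp: filter_empty_conv)
    moreover have "filter (\<lambda>x. i < x) (map (\<lambda>x. x + Suc i) A) = map (\<lambda>x. x + Suc i) A" by simp
    ultimately show ?thesis using lA by (simp add: FL_def)
  qed
  moreover have "sum_list (FL i A B) = sum_list A + sum_list B + (i * i + a * Suc i)"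
    using lA sum_map_add[of "Suc i" A] by (simp add: FL_def sum_list_replicate algebra_simps)
  ultimately show ?thesis by blast
qed

lemma FL_bwd:
  assumes "lam \<in> partitions n" "count_list lam i = i"
  shows "\<exists>A B. A \<in> Vs (length (filter (\<lambda>x. i < x) lam)) (\<lambda>_. True) \<and> B \<in> Qs (i - 1) \<and> lam = FL i A B"
proof -
  have s: "sorted_wrt (\<ge>) lam" and p: "\<forall>x\<in>set lam. 0 < x" using assms(1) by (auto simp: partitions_def)
  let ?AZ = "filter (\<lambda>x. i < x) lam"
  let ?B = "filter (\<lambda>x. x < i) lam"
  let ?A = "map (\<lambda>x. x - Suc i) ?AZ"
  have a0: "map (\<lambda>x. x + Suc i) ?A = ?AZ" unfolding map_map
    by (rule map_idI) auto
  have "lam = ?AZ @ replicate i i @ ?B"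
    using split3[OF s, of i] filter_eq_rep[of i lam] assms(2) by simp
  hence "lam = FL i ?A ?B" unfolding FL_def a0 .
  moreover have "?A \<in> Vs (length ?AZ) (\<lambda>_. True)"
  proof -
    have "sorted_wrt (\<ge>) ?AZ" using s by (simp add: sorted_wrt_filter)
    hence "sorted_wrt (\<ge>) ?A" unfolding sorted_wrt_map by (auto elim: sorted_wrt_mono_rel[rotated])
    thus ?thesis by (simp add: Vs_def)
  qed
  moreover have "?B \<in> Qs (i - 1)" using s p by (auto simp: Qs_def sorted_wrt_filter)
  ultimately show ?thesis by blast
qed

lemma FL_inj:
  assumes "length A1 = length A2" "FL i A1 B1 = FL i A2 B2" shows "A1 = A2 \<and> B1 = B2"
proof -
  have inj: "inj (\<lambda>x::nat. x + Suc i)" by (simp add: inj_on_def)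
  have l: "length (map (\<lambda>x. x + Suc i) A1) = length (map (\<lambda>x. x + Suc i) A2)" using assms(1) by simp
  have "map (\<lambda>x. x + Suc i) A1 = map (\<lambda>x. x + Suc i) A2 \<and> replicate i i @ B1 = replicate i i @ B2"
    using assms(2) unfolding FL_def by (rule append_eq_append_conv[OF disjI1[OF l], THEN iffD1])
  hence "A1 = A2" "B1 = B2" using inj_map_eq_map[OF inj] by (blast, simp)
  thus ?thesis by blast
qed

definition FM :: "nat \<Rightarrow> nat list \<Rightarrow> nat list \<Rightarrow> nat list" where
  "FM i T C = map (\<lambda>x. x + i) T @ i # map Suc C"

lemma FM_fwd:
  assumes "T \<in> Vs (a + (i - 1)) (\<lambda>_. True)" "C \<in> Vs a (\<lambda>x. x \<le> i - 1)" "1 \<le> i"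
  shows "sorted_wrt (\<ge>) (FM i T C) \<and> (\<forall>x\<in>set (FM i T C). 0 < x) \<and> length (FM i T C) = 2 * a + i
    \<and> (\<exists>s\<in>{1..length (FM i T C)}. hook1 (FM i T C) s = s \<and> part (FM i T C) s = i)
    \<and> sum_list (FM i T C) = sum_list T + sum_list C + (i * i + a * Suc i)"
proof -
  have sT: "sorted_wrt (\<ge>) T" and lT: "length T = a + (i - 1)" using assms(1) by (auto simp: Vs_def)
  have sC: "sorted_wrt (\<ge>) C" and lC: "length C = a" and bC: "\<forall>x\<in>set C. x \<le> i - 1"
    using assms(2) by (auto simp: Vs_def)
  have s1: "sorted_wrt (\<ge>) (map (\<lambda>x. x + i) T)"
    using sT unfolding sorted_wrt_map by (auto elim: sorted_wrt_mono_rel[rotated])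
  have s2: "sorted_wrt (\<ge>) (map Suc C)"
    using sC unfolding sorted_wrt_map by (auto elim: sorted_wrt_mono_rel[rotated])
  have bC': "\<forall>x\<in>set (map Suc C). x \<le> i" using bC assms(3) by auto
  have "sorted_wrt (\<ge>) (FM i T C)"
    unfolding FM_def using s1 s2 bC' by (auto simp: sorted_wrt_append)
  moreover have "\<forall>x\<in>set (FM i T C). 0 < x" using assms(3) by (auto simp: FM_def)
  moreover have len: "length (FM i T C) = 2 * a + i" using lT lC assms(3) by (simp add: FM_def)
  moreover have "hook1 (FM i T C) (a + i) = a + i \<and> part (FM i T C) (a + i) = i"
  proof -
    have e: "a + i - 1 = length (map (\<lambda>x. x + i) T)" using lT assms(3) by simp
    have "part (FM i T C) (a + i) = i"
      unfolding Defs.part_def FM_def e by (rule nth_append_length)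
    thus ?thesis using len by (simp add: hook1_def)
  qed
  moreover have "a + i \<in> {1..length (FM i T C)}" using len assms(3) by auto
  moreover have "sum_list (FM i T C) = sum_list T + sum_list C + (i * i + a * Suc i)"
  proof -
    have sC: "sum_list (map Suc C) = sum_list C + a"
      using sum_list_Suc[of "\<lambda>x. x" C] lC by simp
    have "sum_list (FM i T C) = sum_list T + i * (a + (i - 1)) + i + (sum_list C + a)"
      unfolding FM_def sum_list_append sum_list.Cons sC sum_map_add lT by (simp only: mult.commute)
    also have "\<dots> = sum_list T + sum_list C + (i * i + a * Suc i)"
    proof -
      obtain j where j: "i = Suc j" using assms(3) by (cases i) auto
      show ?thesis unfolding j by (simp add: algebra_simps)
    qed
    finally show ?thesis .
  qed
  ultimately show ?thesis by blast
qed

lemma FM_bwd: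
  assumes "mu \<in> partitions n" "length mu = 2 * a + i" "s \<in> {1..length mu}" "hook1 mu s = s" "part mu s = i"
    "1 \<le> i"
  shows "\<exists>T C. T \<in> Vs (a + (i - 1)) (\<lambda>_. True) \<and> C \<in> Vs a (\<lambda>x. x \<le> i - 1) \<and> mu = FM i T C"
proof -
  have s: "sorted_wrt (\<ge>) mu" and pos: "\<forall>x\<in>set mu. 0 < x" using assms(1) by (auto simp: partitions_def)
  have ss: "s = a + i" using assms(2-5) by (auto simp: hook1_def)
  let ?p = "a + (i - 1)"
  have pl: "?p < length mu" using assms(2,6) by simp
  have "a + i - 1 = ?p" using assms(6) by simp
  moreover have "mu ! (s - 1) = i" using assms(5) by (simp add: Defs.part_def)
  ultimately have mp: "mu ! ?p = i" using ss by simp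
  define TZ where "TZ = take ?p mu"
  define CZ where "CZ = drop (Suc ?p) mu"
  have ltz: "length TZ = ?p" using pl by (simp add: TZ_def)
  have incz: "set CZ \<subseteq> set mu" by (simp add: CZ_def set_drop_subset)
  have dec: "mu = TZ @ i # CZ" using id_take_nth_drop[OF pl] mp unfolding TZ_def CZ_def by simp
  have sd: "sorted_wrt (\<ge>) (TZ @ i # CZ)" using s dec by simp
  hence geT: "\<forall>x\<in>set TZ. i \<le> x" and leC: "\<forall>y\<in>set CZ. y \<le> i"
    and sT0: "sorted_wrt (\<ge>) TZ" and sC0: "sorted_wrt (\<ge>) CZ"
    by (auto simp: sorted_wrt_append)
  have posC: "\<forall>y\<in>set CZ. 0 < y" using pos incz by blast
  let ?T = "map (\<lambda>x. x - i) TZ" and ?C = "map (\<lambda>x. x - 1) CZ"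
  have eT: "map (\<lambda>x. x + i) ?T = TZ" unfolding map_map by (rule map_idI) (use geT in auto)
  have eC: "map Suc ?C = CZ" unfolding map_map by (rule map_idI) (use posC in auto)
  have "mu = FM i ?T ?C" unfolding FM_def eT eC using dec .
  moreover have "?T \<in> Vs (a + (i - 1)) (\<lambda>_. True)"
  proof -
    have "sorted_wrt (\<ge>) ?T" using sT0 unfolding sorted_wrt_map
      by (rule sorted_wrt_mono_rel[rotated]) auto
    thus ?thesis using ltz by (simp add: Vs_def)
  qed
  moreover have "?C \<in> Vs a (\<lambda>x. x \<le> i - 1)"
  proof -
    have "sorted_wrt (\<ge>) ?C" using sC0 unfolding sorted_wrt_map
      by (rule sorted_wrt_mono_rel[rotated]) auto
    moreover have "length CZ = a" using assms(2,6) arg_cong[OF dec, of length] ltz by simp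
    ultimately show ?thesis using leC by (auto simp: Vs_def)
  qed
  ultimately show ?thesis by blast
qed

lemma FM_inj:
  assumes "length T1 = length T2" "FM i T1 C1 = FM i T2 C2" shows "T1 = T2 \<and> C1 = C2"
proof -
  have inj: "inj (\<lambda>x::nat. x + i)" by (simp add: inj_on_def)
  have l: "length (map (\<lambda>x. x + i) T1) = length (map (\<lambda>x. x + i) T2)" using assms(1) by simp
  have "map (\<lambda>x. x + i) T1 = map (\<lambda>x. x + i) T2 \<and> i # map Suc C1 = i # map Suc C2"
    using assms(2) unfolding FM_def by (rule append_eq_append_conv[OF disjI1[OF l], THEN iffD1])
  hence "T1 = T2" "C1 = C2" using inj_map_eq_map[OF inj] inj_map_eq_map[OF inj_Suc] by (blast, simp)
  thus ?thesis by blast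
qed



lemma fin_part: "finite (partitions n)"
proof -
  have "partitions n \<subseteq> {v. length v \<le> n \<and> sum_list v \<le> n}"
    by (auto simp: partitions_def intro: len_le_sum)
  thus ?thesis using fin_bounded finite_subset by blast
qed

lemma card_La:
  assumes i: "1 \<le> i"
  shows "card {lam \<in> partitions n. count_list lam i = i \<and> length (filter (\<lambda>x. i < x) lam) = a}
    = (if i * i + a * Suc i \<le> n then
        (\<Sum>j=0..n - (i * i + a * Suc i). cnt (Vs a (\<lambda>_. True)) j * cnt (Qs (i - 1)) (n - (i * i + a * Suc i) - j))
       else 0)"
proof -
  let ?L = "{lam \<in> partitions n. count_list lam i = i \<and> length (filter (\<lambda>x. i < x) lam) = a}"
  define c where "c = i * i + a * Suc i"
  define N where "N = n - c"
  let ?P = "{(A,B). A \<in> Vs a (\<lambda>_. True) \<and> B \<in> Qs (i - 1) \<and> sum_list A + sum_list B = N}"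
  have bwd: "\<exists>A B. A \<in> Vs a (\<lambda>_. True) \<and> B \<in> Qs (i - 1) \<and> lam = FL i A B \<and> sum_list A + sum_list B + c = n"
    if "lam \<in> ?L" for lam
  proof -
    from that have p: "lam \<in> partitions n" "count_list lam i = i" "length (filter (\<lambda>x. i < x) lam) = a" by auto
    from FL_bwd[OF p(1,2)] p(3) obtain A B where ab: "A \<in> Vs a (\<lambda>_. True)" "B \<in> Qs (i - 1)" "lam = FL i A B"
      by auto
    have "sum_list lam = n" using p(1) by (simp add: partitions_def)
    hence "sum_list A + sum_list B + c = n" using FL_fwd[OF ab(1,2)] ab(3) by (simp add: c_def)
    thus ?thesis using ab by blast
  qed
  show ?thesis
  proof (cases "c \<le> n")
    case True
    have eq: "?L = (\<lambda>(A,B). FL i A B) ` ?P"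
    proof (intro equalityI subsetI)
      fix lam assume "lam \<in> ?L"
      then obtain A B where "A \<in> Vs a (\<lambda>_. True)" "B \<in> Qs (i - 1)" "lam = FL i A B" "sum_list A + sum_list B + c = n"
        using bwd by blast
      moreover hence "sum_list A + sum_list B = N" by (simp add: N_def)
      ultimately show "lam \<in> (\<lambda>(A,B). FL i A B) ` ?P" by force
    next
      fix lam assume "lam \<in> (\<lambda>(A,B). FL i A B) ` ?P"
      then obtain A B where ab: "A \<in> Vs a (\<lambda>_. True)" "B \<in> Qs (i - 1)" "sum_list A + sum_list B = N"
        "lam = FL i A B" by auto
      note f = FL_fwd[OF ab(1,2)]
      have "sum_list lam = n" using f ab(3,4) True by (simp add: c_def N_def)
      thus "lam \<in> ?L" using f ab(4) by (simp add: partitions_def)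
    qed
    have inj: "inj_on (\<lambda>(A,B). FL i A B) ?P"
      unfolding inj_on_def by (clarsimp simp: Vs_def) (metis FL_inj)
    have "card ?L = card ?P" unfolding eq using inj by (rule card_image)
    also have "\<dots> = (\<Sum>j=0..N. card {A \<in> Vs a (\<lambda>_. True). sum_list A = j} * card {B \<in> Qs (i - 1). sum_list B = N - j})"
      by (rule conv) (simp_all add: fin_Vs fin_Qs)
    finally show ?thesis using True by (simp add: cnt_def c_def N_def)
  next
    case False
    have "?L = {}" using bwd False by fastforce
    hence "card ?L = 0" by (simp only: card.empty)
    thus ?thesis using False by (simp add: c_def)
  qed
qed

lemma card_Ma:
  assumes i: "1 \<le> i"
  shows "card {mu \<in> partitions n. (\<exists>s\<in>{1..length mu}. hook1 mu s = s \<and> part mu s = i) \<and> length mu = 2 * a + i}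
    = (if i * i + a * Suc i \<le> n then
        (\<Sum>j=0..n - (i * i + a * Suc i). cnt (Vs (a + (i - 1)) (\<lambda>_. True)) j * cnt (Vs a (\<lambda>x. x \<le> i - 1)) (n - (i * i + a * Suc i) - j))
       else 0)"
proof -
  let ?L = "{mu \<in> partitions n. (\<exists>s\<in>{1..length mu}. hook1 mu s = s \<and> part mu s = i) \<and> length mu = 2 * a + i}"
  define c where "c = i * i + a * Suc i"
  define N where "N = n - c"
  let ?P = "{(T,C). T \<in> Vs (a + (i - 1)) (\<lambda>_. True) \<and> C \<in> Vs a (\<lambda>x. x \<le> i - 1) \<and> sum_list T + sum_list C = N}"
  have bwd: "\<exists>T C. T \<in> Vs (a + (i - 1)) (\<lambda>_. True) \<and> C \<in> Vs a (\<lambda>x. x \<le> i - 1) \<and> mu = FM i T C \<and> sum_list T + sum_list C + c = n"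
    if "mu \<in> ?L" for mu
  proof -
    from that obtain s where p: "mu \<in> partitions n" "length mu = 2 * a + i" "s \<in> {1..length mu}"
      "hook1 mu s = s" "part mu s = i" by auto
    from FM_bwd[OF p i] obtain T C where ab: "T \<in> Vs (a + (i - 1)) (\<lambda>_. True)" "C \<in> Vs a (\<lambda>x. x \<le> i - 1)" "mu = FM i T C"
      by auto
    have "sum_list mu = n" using p(1) by (simp add: partitions_def)
    hence "sum_list T + sum_list C + c = n" using FM_fwd[OF ab(1,2) i] ab(3) by (simp add: c_def)
    thus ?thesis using ab by blast
  qed
  show ?thesis
  proof (cases "c \<le> n")
    case True
    have eq: "?L = (\<lambda>(T,C). FM i T C) ` ?P"
    proof (intro equalityI subsetI)
      fix mu assume "mu \<in> ?L"
      then obtain T C where "T \<in> Vs (a + (i - 1)) (\<lambda>_. True)" "C \<in> Vs a (\<lambda>x. x \<le> i - 1)" "mu = FM i T C"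
        "sum_list T + sum_list C + c = n"
        using bwd by blast
      moreover hence "sum_list T + sum_list C = N" by (simp add: N_def)
      ultimately show "mu \<in> (\<lambda>(T,C). FM i T C) ` ?P" by force
    next
      fix mu assume "mu \<in> (\<lambda>(T,C). FM i T C) ` ?P"
      then obtain T C where ab: "T \<in> Vs (a + (i - 1)) (\<lambda>_. True)" "C \<in> Vs a (\<lambda>x. x \<le> i - 1)"
        "sum_list T + sum_list C = N" "mu = FM i T C" by auto
      note f = FM_fwd[OF ab(1,2) i]
      have "sum_list mu = n" using f ab(3,4) True by (simp add: c_def N_def)
      hence "mu \<in> partitions n" using f ab(4) by (simp add: partitions_def)
      thus "mu \<in> ?L" using f ab(4) by blast
    qed
    have inj: "inj_on (\<lambda>(T,C). FM i T C) ?P"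
      unfolding inj_on_def by (clarsimp simp: Vs_def) (metis FM_inj)
    have "card ?L = card ?P" unfolding eq using inj by (rule card_image)
    also have "\<dots> = (\<Sum>j=0..N. card {T \<in> Vs (a + (i - 1)) (\<lambda>_. True). sum_list T = j}
        * card {C \<in> Vs a (\<lambda>x. x \<le> i - 1). sum_list C = N - j})"
      by (rule conv) (simp_all add: fin_Vs)
    finally show ?thesis using True by (simp add: cnt_def c_def N_def)
  next
    case False
    have "?L = {}" using bwd False by fastforce
    hence "card ?L = 0" by (simp only: card.empty)
    thus ?thesis using False by (simp add: c_def)
  qed
qed

theorem proposition2p3:
  fixes n i :: nat
  assumes "n \<ge> 1" and "i \<ge> 1"
  shows "card {lam \<in> partitions n. count_list lam i = i}
       = card {mu \<in> partitions n. \<exists>s\<in>{1..length mu}. hook1 mu s = s \<and> part mu s = i}"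
proof -
  let ?L = "{lam \<in> partitions n. count_list lam i = i}"
  let ?M = "{mu \<in> partitions n. \<exists>s\<in>{1..length mu}. hook1 mu s = s \<and> part mu s = i}"
  let ?La = "\<lambda>a. {lam \<in> partitions n. count_list lam i = i \<and> length (filter (\<lambda>x. i < x) lam) = a}"
  let ?Ma = "\<lambda>a. {mu \<in> partitions n. (\<exists>s\<in>{1..length mu}. hook1 mu s = s \<and> part mu s = i) \<and> length mu = 2 * a + i}"
  have lenle: "length v \<le> n" if "v \<in> partitions n" for v
    using that len_le_sum[of v] by (auto simp: partitions_def)
  have eL: "?L = (\<Union>a\<in>{..n}. ?La a)"
  proof (intro equalityI subsetI)
    fix lam assume l: "lam \<in> ?L"
    hence "length lam \<le> n" using lenle[of lam] by blast
    hence "length (filter (\<lambda>x. i < x) lam) \<le> n" using length_filter_le[of "\<lambda>x. i < x" lam] by linarith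
    thus "lam \<in> (\<Union>a\<in>{..n}. ?La a)" using l by blast
  qed auto
  have eM: "?M = (\<Union>a\<in>{..n}. ?Ma a)"
  proof (intro equalityI subsetI)
    fix mu assume l: "mu \<in> ?M"
    then obtain s where s: "s \<in> {1..length mu}" "hook1 mu s = s" "part mu s = i" by auto
    hence "length mu = 2 * (length mu - s) + i" by (auto simp: hook1_def)
    moreover have "length mu - s \<le> n" using lenle[of mu] l by auto
    ultimately show "mu \<in> (\<Union>a\<in>{..n}. ?Ma a)" using l by blast
  qed auto
  have cL: "card ?L = (\<Sum>a\<in>{..n}. card (?La a))"
    unfolding eL by (rule card_UN_disjoint) (auto intro: finite_subset[OF _ fin_part])
  have cM: "card ?M = (\<Sum>a\<in>{..n}. card (?Ma a))"
    unfolding eM by (rule card_UN_disjoint) (auto intro: finite_subset[OF _ fin_part])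
  have "card (?La a) = card (?Ma a)" for a
    unfolding card_La[OF assms(2)] card_Ma[OF assms(2)] using main_count[where a=a and b="i - 1" and N="n - (i * i + a * Suc i)"] by simp
  thus ?thesis using cL cM by simp
qed


end
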